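(* Let $L$ be a distributive lattice and $\mathbf x,\mathbf y\in L^n$. The following are equivalent: (i) $\mathbf x$ and $\mathbf y$ are g-comonotone; (ii) $\mathbf x$ and $\mathbf y$ are dually g-comonotone; (iii) $\bigwedge_{i\in I}(x_i\vee y_i)=\bigwedge_{i\in I}x_i\vee\bigwedge_{i\in I}y_i$ for each non-empty subset $I\subseteq\{1,\dots,n\}$; (iv) $\bigvee_{i\in I}(x_i\wedge y_i)=\bigvee_{i\in I}x_i\wedge\bigvee_{i\in I}y_i$ for each non-empty subset $I\subseteq\{1,\dots,n\}$.
   Context: $\mathbf x,\mathbf y\in L^n$ are g-comonotone if for every pair $i,j\in\{1,\dots,n\}$: $(x_i\vee y_i)\wedge(x_j\vee y_j)=(x_i\wedge x_j)\vee(y_i\wedge y_j)$. They are dually g-comonotone if for every pair $i,j$: $(x_i\wedge y_i)\vee(x_j\wedge y_j)=(x_i\vee x_j)\wedge(y_i\vee y_j)$. *)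

theory Defs
  imports Main
begin

text \<open>Vectors in L^n are modelled as functions nat => L, only the entries at
indices 1..n being relevant.\<close>

definition g_comonotone :: "nat \<Rightarrow> (nat \<Rightarrow> 'a::distrib_lattice) \<Rightarrow> (nat \<Rightarrow> 'a) \<Rightarrow> bool" where
  "g_comonotone n x y \<longleftrightarrow>
     (\<forall>i\<in>{1..n}. \<forall>j\<in>{1..n}.
        inf (sup (x i) (y i)) (sup (x j) (y j)) = sup (inf (x i) (x j)) (inf (y i) (y j)))"

definition dually_g_comonotone :: "nat \<Rightarrow> (nat \<Rightarrow> 'a::distrib_lattice) \<Rightarrow> (nat \<Rightarrow> 'a) \<Rightarrow> bool" where
  "dually_g_comonotone n x y \<longleftrightarrow>
     (\<forall>i\<in>{1..n}. \<forall>j\<in>{1..n}.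
        sup (inf (x i) (y i)) (inf (x j) (y j)) = inf (sup (x i) (x j)) (sup (y i) (y j)))"

end

theory Submission imports Defs begin
unbundle lattice_syntax
lemma pg: "(((a::'a::distrib_lattice) \<squnion> b) \<sqinter> (c \<squnion> d) = (a \<sqinter> c) \<squnion> (b \<sqinter> d)) \<longleftrightarrow> (a \<sqinter> d \<le> c \<squnion> b \<and> b \<sqinter> c \<le> a \<squnion> d)"
proof
  assume h: "(a \<squnion> b) \<sqinter> (c \<squnion> d) = (a \<sqinter> c) \<squnion> (b \<sqinter> d)"
  have "a \<sqinter> d \<le> (a \<squnion> b) \<sqinter> (c \<squnion> d)" by (simp add: le_infI1 le_infI2)
  moreover have "b \<sqinter> c \<le> (a \<squnion> b) \<sqinter> (c \<squnion> d)" by (simp add: le_infI1 le_infI2)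
  moreover have "(a \<sqinter> c) \<squnion> (b \<sqinter> d) \<le> c \<squnion> b" by (simp add: le_infI1 le_infI2 le_supI1 le_supI2)
  moreover have "(a \<sqinter> c) \<squnion> (b \<sqinter> d) \<le> a \<squnion> d" by (simp add: le_infI1 le_infI2 le_supI1 le_supI2)
  ultimately show "a \<sqinter> d \<le> c \<squnion> b \<and> b \<sqinter> c \<le> a \<squnion> d" using h by (metis order_trans)
next
  assume h: "a \<sqinter> d \<le> c \<squnion> b \<and> b \<sqinter> c \<le> a \<squnion> d"
  have e: "(a \<squnion> b) \<sqinter> (c \<squnion> d) = (a \<sqinter> c) \<squnion> (a \<sqinter> d) \<squnion> (b \<sqinter> c) \<squnion> (b \<sqinter> d)"
    by (simp add: inf_sup_distrib1 inf_sup_distrib2 sup.assoc sup.commute sup.left_commute)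
  have 1: "a \<sqinter> d = (a \<sqinter> d \<sqinter> c) \<squnion> (a \<sqinter> d \<sqinter> b)" using h
    by (metis inf.absorb1 inf_sup_distrib1)
  have 2: "b \<sqinter> c = (b \<sqinter> c \<sqinter> a) \<squnion> (b \<sqinter> c \<sqinter> d)" using h
    by (metis inf.absorb1 inf_sup_distrib1)
  have "a \<sqinter> d \<le> (a \<sqinter> c) \<squnion> (b \<sqinter> d)" by (subst 1) (auto intro: le_supI1 le_supI2 simp: le_infI1 le_infI2 inf.coboundedI1)
  moreover have "b \<sqinter> c \<le> (a \<sqinter> c) \<squnion> (b \<sqinter> d)" by (subst 2) (auto intro: le_supI1 le_supI2 simp: le_infI1 le_infI2 inf.coboundedI1)
  ultimately have "(a \<squnion> b) \<sqinter> (c \<squnion> d) \<le> (a \<sqinter> c) \<squnion> (b \<sqinter> d)" unfolding e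
    by (simp add: le_supI1 le_supI2)
  moreover have "(a \<sqinter> c) \<squnion> (b \<sqinter> d) \<le> (a \<squnion> b) \<sqinter> (c \<squnion> d)"
    by (simp add: le_infI1 le_infI2 le_supI1 le_supI2)
  ultimately show "(a \<squnion> b) \<sqinter> (c \<squnion> d) = (a \<sqinter> c) \<squnion> (b \<sqinter> d)" by (rule antisym)
qed
lemma pd: "(((a::'a::distrib_lattice) \<sqinter> b) \<squnion> (c \<sqinter> d) = (a \<squnion> c) \<sqinter> (b \<squnion> d)) \<longleftrightarrow> (a \<sqinter> d \<le> c \<squnion> b \<and> b \<sqinter> c \<le> a \<squnion> d)"
proof
  assume h: "((a::'a::distrib_lattice) \<sqinter> b) \<squnion> (c \<sqinter> d) = (a \<squnion> c) \<sqinter> (b \<squnion> d)"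
  have "a \<sqinter> d \<le> (a \<squnion> c) \<sqinter> (b \<squnion> d)" by (simp add: le_infI1 le_infI2)
  moreover have "b \<sqinter> c \<le> (a \<squnion> c) \<sqinter> (b \<squnion> d)" by (simp add: le_infI1 le_infI2)
  moreover have "(a \<sqinter> b) \<squnion> (c \<sqinter> d) \<le> c \<squnion> b" by (simp add: le_infI1 le_infI2 le_supI1 le_supI2)
  moreover have "(a \<sqinter> b) \<squnion> (c \<sqinter> d) \<le> a \<squnion> d" by (simp add: le_infI1 le_infI2 le_supI1 le_supI2)
  ultimately show "a \<sqinter> d \<le> c \<squnion> b \<and> b \<sqinter> c \<le> a \<squnion> d" using h by (metis order_trans)
next
  assume h: "a \<sqinter> d \<le> c \<squnion> b \<and> b \<sqinter> c \<le> a \<squnion> d"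
  have e: "(a \<squnion> c) \<sqinter> (b \<squnion> d) = (a \<sqinter> b) \<squnion> (a \<sqinter> d) \<squnion> (c \<sqinter> b) \<squnion> (c \<sqinter> d)"
    by (simp add: inf_sup_distrib1 inf_sup_distrib2 sup.assoc sup.commute sup.left_commute)
  have 1: "a \<sqinter> d = (a \<sqinter> d \<sqinter> c) \<squnion> (a \<sqinter> d \<sqinter> b)" using h
    by (metis inf.absorb1 inf_sup_distrib1)
  have 2: "b \<sqinter> c = (b \<sqinter> c \<sqinter> a) \<squnion> (b \<sqinter> c \<sqinter> d)" using h
    by (metis inf.absorb1 inf_sup_distrib1)
  have "a \<sqinter> d \<le> (a \<sqinter> b) \<squnion> (c \<sqinter> d)" by (subst 1) (auto intro: le_supI1 le_supI2 simp: le_infI1 le_infI2 inf.coboundedI1)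
  moreover have "c \<sqinter> b \<le> (a \<sqinter> b) \<squnion> (c \<sqinter> d)" by (subst inf.commute, subst 2) (auto intro: le_supI1 le_supI2 simp: le_infI1 le_infI2 inf.coboundedI1)
  ultimately have "(a \<squnion> c) \<sqinter> (b \<squnion> d) \<le> (a \<sqinter> b) \<squnion> (c \<sqinter> d)" unfolding e
    by (simp add: le_supI1 le_supI2)
  moreover have "(a \<sqinter> b) \<squnion> (c \<sqinter> d) \<le> (a \<squnion> c) \<sqinter> (b \<squnion> d)"
    by (simp add: le_infI1 le_infI2 le_supI1 le_supI2)
  ultimately show "(a \<sqinter> b) \<squnion> (c \<sqinter> d) = (a \<squnion> c) \<sqinter> (b \<squnion> d)" by (rule antisym[symmetric])
qed

definition PP :: "nat \<Rightarrow> (nat \<Rightarrow> 'a::distrib_lattice) \<Rightarrow> (nat \<Rightarrow> 'a) \<Rightarrow> bool" where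
  "PP n x y \<longleftrightarrow> (\<forall>i\<in>{1..n}. \<forall>j\<in>{1..n}. x i \<sqinter> y j \<le> x j \<squnion> y i)"

lemma g_PP: "g_comonotone n x y \<longleftrightarrow> PP n x y"
  unfolding g_comonotone_def PP_def pg by (auto simp: inf_commute sup_commute)

lemma d_PP: "dually_g_comonotone n x y \<longleftrightarrow> PP n x y"
  unfolding dually_g_comonotone_def PP_def pd by (auto simp: inf_commute sup_commute)

lemma c1:
  fixes x y :: "nat \<Rightarrow> 'a::distrib_lattice"
  assumes "finite J" "J \<noteq> {}" "\<forall>j\<in>J. x k \<sqinter> y j \<le> x j \<squnion> y k"
  shows "x k \<sqinter> Inf_fin (y ` J) \<le> Inf_fin (x ` J) \<squnion> y k"
proof -
  have "Inf_fin (x ` J) \<squnion> y k = y k \<squnion> Inf_fin (x ` J)" by (rule sup_commute)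
  also have "\<dots> = Inf_fin {y k \<squnion> a |a. a \<in> x ` J}" using assms by (simp add: sup_Inf1_distrib)
  finally have e: "Inf_fin (x ` J) \<squnion> y k = Inf_fin {y k \<squnion> a |a. a \<in> x ` J}" .
  show ?thesis unfolding e
  proof (rule Inf_fin.boundedI)
    show "finite {y k \<squnion> a |a. a \<in> x ` J}" using assms by auto
    show "{y k \<squnion> a |a. a \<in> x ` J} \<noteq> {}" using assms by auto
    fix a assume "a \<in> {y k \<squnion> a |a. a \<in> x ` J}"
    then obtain j where j: "j \<in> J" "a = y k \<squnion> x j" by auto
    have "x k \<sqinter> Inf_fin (y ` J) \<le> x k \<sqinter> y j"
      using j assms by (simp add: inf.coboundedI2 Inf_fin.coboundedI)
    also have "\<dots> \<le> a" using assms j by (simp add: sup_commute)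
    finally show "x k \<sqinter> Inf_fin (y ` J) \<le> a" .
  qed
qed

lemma c2:
  fixes x y :: "nat \<Rightarrow> 'a::distrib_lattice"
  assumes "finite J" "J \<noteq> {}" "\<forall>j\<in>J. x k \<sqinter> y j \<le> x j \<squnion> y k"
  shows "x k \<sqinter> Sup_fin (y ` J) \<le> Sup_fin (x ` J) \<squnion> y k"
proof -
  have e: "x k \<sqinter> Sup_fin (y ` J) = Sup_fin {x k \<sqinter> a |a. a \<in> y ` J}" using assms by (simp add: inf_Sup1_distrib)
  show ?thesis unfolding e
  proof (rule Sup_fin.boundedI)
    show "finite {x k \<sqinter> a |a. a \<in> y ` J}" using assms by auto
    show "{x k \<sqinter> a |a. a \<in> y ` J} \<noteq> {}" using assms by auto
    fix a assume "a \<in> {x k \<sqinter> a |a. a \<in> y ` J}"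
    then obtain j where j: "j \<in> J" "a = x k \<sqinter> y j" by auto
    have "a \<le> x j \<squnion> y k" using assms j by simp
    also have "\<dots> \<le> Sup_fin (x ` J) \<squnion> y k"
      using j assms by (simp add: sup.coboundedI1 Sup_fin.coboundedI le_supI1)
    finally show "a \<le> Sup_fin (x ` J) \<squnion> y k" .
  qed
qed

lemma pg_le: "(a::'a::distrib_lattice) \<sqinter> d \<le> c \<squnion> b \<Longrightarrow> b \<sqinter> c \<le> a \<squnion> d \<Longrightarrow> (a \<squnion> b) \<sqinter> (c \<squnion> d) \<le> (a \<sqinter> c) \<squnion> (b \<sqinter> d)"
  using pg[of a b c d] by simp

lemma pd_le: "(a::'a::distrib_lattice) \<sqinter> d \<le> c \<squnion> b \<Longrightarrow> b \<sqinter> c \<le> a \<squnion> d \<Longrightarrow> (a \<squnion> c) \<sqinter> (b \<squnion> d) \<le> (a \<sqinter> b) \<squnion> (c \<sqinter> d)"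
  using pd[of a b c d] by simp

lemma ind_inf:
  fixes x y :: "nat \<Rightarrow> 'a::distrib_lattice"
  assumes "finite I" "I \<noteq> {}"
  shows "(\<forall>i\<in>I. \<forall>j\<in>I. x i \<sqinter> y j \<le> x j \<squnion> y i) \<longrightarrow>
    Inf_fin ((\<lambda>i. x i \<squnion> y i) ` I) \<le> Inf_fin (x ` I) \<squnion> Inf_fin (y ` I)"
  using assms
proof (induction I rule: finite_ne_induct)
  case (singleton k) then show ?case by simp
next
  case (insert k J)
  show ?case
  proof
    assume P: "\<forall>i\<in>insert k J. \<forall>j\<in>insert k J. x i \<sqinter> y j \<le> x j \<squnion> y i"
    have IH: "Inf_fin ((\<lambda>i. x i \<squnion> y i) ` J) \<le> Inf_fin (x ` J) \<squnion> Inf_fin (y ` J)"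
      using insert P by auto
    have h1: "x k \<sqinter> Inf_fin (y ` J) \<le> Inf_fin (x ` J) \<squnion> y k"
      using c1[of J x k y] insert P by auto
    have h2: "y k \<sqinter> Inf_fin (x ` J) \<le> x k \<squnion> Inf_fin (y ` J)"
      using c1[of J y k x] insert P by (auto simp: inf_commute sup_commute)
    have "Inf_fin ((\<lambda>i. x i \<squnion> y i) ` insert k J) = (x k \<squnion> y k) \<sqinter> Inf_fin ((\<lambda>i. x i \<squnion> y i) ` J)"
      using insert by simp
    also have "\<dots> \<le> (x k \<squnion> y k) \<sqinter> (Inf_fin (x ` J) \<squnion> Inf_fin (y ` J))"
      using IH by (simp add: inf.coboundedI2)
    also have "\<dots> \<le> (x k \<sqinter> Inf_fin (x ` J)) \<squnion> (y k \<sqinter> Inf_fin (y ` J))"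
      using pg_le h1 h2 by blast
    also have "\<dots> = Inf_fin (x ` insert k J) \<squnion> Inf_fin (y ` insert k J)"
      using insert by simp
    finally show "Inf_fin ((\<lambda>i. x i \<squnion> y i) ` insert k J) \<le> Inf_fin (x ` insert k J) \<squnion> Inf_fin (y ` insert k J)" .
  qed
qed

lemma ind_sup:
  fixes x y :: "nat \<Rightarrow> 'a::distrib_lattice"
  assumes "finite I" "I \<noteq> {}"
  shows "(\<forall>i\<in>I. \<forall>j\<in>I. x i \<sqinter> y j \<le> x j \<squnion> y i) \<longrightarrow>
    Sup_fin (x ` I) \<sqinter> Sup_fin (y ` I) \<le> Sup_fin ((\<lambda>i. x i \<sqinter> y i) ` I)"
  using assms
proof (induction I rule: finite_ne_induct)
  case (singleton k) then show ?case by simp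
next
  case (insert k J)
  show ?case
  proof
    assume P: "\<forall>i\<in>insert k J. \<forall>j\<in>insert k J. x i \<sqinter> y j \<le> x j \<squnion> y i"
    have IH: "Sup_fin (x ` J) \<sqinter> Sup_fin (y ` J) \<le> Sup_fin ((\<lambda>i. x i \<sqinter> y i) ` J)"
      using insert P by auto
    have h1: "x k \<sqinter> Sup_fin (y ` J) \<le> Sup_fin (x ` J) \<squnion> y k"
      using c2[of J x k y] insert P by auto
    have h2: "y k \<sqinter> Sup_fin (x ` J) \<le> x k \<squnion> Sup_fin (y ` J)"
      using c2[of J y k x] insert P by (auto simp: inf_commute sup_commute)
    have "Sup_fin (x ` insert k J) \<sqinter> Sup_fin (y ` insert k J) = (x k \<squnion> Sup_fin (x ` J)) \<sqinter> (y k \<squnion> Sup_fin (y ` J))"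
      using insert by simp
    also have "\<dots> \<le> (x k \<sqinter> y k) \<squnion> (Sup_fin (x ` J) \<sqinter> Sup_fin (y ` J))"
      using pd_le h1 h2 by blast
    also have "\<dots> \<le> (x k \<sqinter> y k) \<squnion> Sup_fin ((\<lambda>i. x i \<sqinter> y i) ` J)"
      using IH by (simp add: sup.coboundedI2)
    also have "\<dots> = Sup_fin ((\<lambda>i. x i \<sqinter> y i) ` insert k J)"
      using insert by simp
    finally show "Sup_fin (x ` insert k J) \<sqinter> Sup_fin (y ` insert k J) \<le> Sup_fin ((\<lambda>i. x i \<sqinter> y i) ` insert k J)" .
  qed
qed

lemma triv_inf:
  fixes x y :: "nat \<Rightarrow> 'a::distrib_lattice"
  assumes "finite I" "I \<noteq> {}"
  shows "Inf_fin (x ` I) \<squnion> Inf_fin (y ` I) \<le> Inf_fin ((\<lambda>i. x i \<squnion> y i) ` I)"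
proof (rule Inf_fin.boundedI)
  show "finite ((\<lambda>i. x i \<squnion> y i) ` I)" "(\<lambda>i. x i \<squnion> y i) ` I \<noteq> {}" using assms by auto
  fix a assume "a \<in> (\<lambda>i. x i \<squnion> y i) ` I"
  then obtain i where i: "i \<in> I" "a = x i \<squnion> y i" by auto
  have "Inf_fin (x ` I) \<le> x i" using i assms by (simp add: Inf_fin.coboundedI)
  moreover have "Inf_fin (y ` I) \<le> y i" using i assms by (simp add: Inf_fin.coboundedI)
  ultimately show "Inf_fin (x ` I) \<squnion> Inf_fin (y ` I) \<le> a" unfolding i(2) by (rule sup_mono)
qed

lemma triv_sup:
  fixes x y :: "nat \<Rightarrow> 'a::distrib_lattice"
  assumes "finite I" "I \<noteq> {}"
  shows "Sup_fin ((\<lambda>i. x i \<sqinter> y i) ` I) \<le> Sup_fin (x ` I) \<sqinter> Sup_fin (y ` I)"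
proof (rule Sup_fin.boundedI)
  show "finite ((\<lambda>i. x i \<sqinter> y i) ` I)" "(\<lambda>i. x i \<sqinter> y i) ` I \<noteq> {}" using assms by auto
  fix a assume "a \<in> (\<lambda>i. x i \<sqinter> y i) ` I"
  then obtain i where i: "i \<in> I" "a = x i \<sqinter> y i" by auto
  have "x i \<le> Sup_fin (x ` I)" using i assms by (simp add: Sup_fin.coboundedI)
  moreover have "y i \<le> Sup_fin (y ` I)" using i assms by (simp add: Sup_fin.coboundedI)
  ultimately show "a \<le> Sup_fin (x ` I) \<sqinter> Sup_fin (y ` I)" unfolding i(2) by (rule inf_mono)
qed

lemma P_iii: "PP n x y \<longleftrightarrow> (\<forall>I. I \<subseteq> {1..n} \<and> I \<noteq> {} \<longrightarrow>
            Inf_fin ((\<lambda>i. sup (x i) (y i)) ` I) = sup (Inf_fin (x ` I)) (Inf_fin (y ` I)))"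
proof
  assume P: "PP n x y"
  show "\<forall>I. I \<subseteq> {1..n} \<and> I \<noteq> {} \<longrightarrow>
            Inf_fin ((\<lambda>i. sup (x i) (y i)) ` I) = sup (Inf_fin (x ` I)) (Inf_fin (y ` I))"
  proof (intro allI impI)
    fix I assume I: "I \<subseteq> {1..n} \<and> I \<noteq> {}"
    then have f: "finite I" using finite_subset by blast
    have "\<forall>i\<in>I. \<forall>j\<in>I. x i \<sqinter> y j \<le> x j \<squnion> y i" using P I unfolding PP_def by blast
    then show "Inf_fin ((\<lambda>i. sup (x i) (y i)) ` I) = sup (Inf_fin (x ` I)) (Inf_fin (y ` I))"
      using ind_inf[OF f, of x y] triv_inf[OF f, of x y] I by (intro antisym) auto
  qed
next
  assume H: "\<forall>I. I \<subseteq> {1..n} \<and> I \<noteq> {} \<longrightarrow>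
            Inf_fin ((\<lambda>i. sup (x i) (y i)) ` I) = sup (Inf_fin (x ` I)) (Inf_fin (y ` I))"
  have "g_comonotone n x y" unfolding g_comonotone_def
  proof (intro ballI)
    fix i j assume ij: "i \<in> {1..n}" "j \<in> {1..n}"
    then have "{i,j} \<subseteq> {1..n} \<and> {i,j} \<noteq> {}" by auto
    then have "Inf_fin ((\<lambda>i. sup (x i) (y i)) ` {i,j}) = sup (Inf_fin (x ` {i,j})) (Inf_fin (y ` {i,j}))"
      using H by blast
    then show "(x i \<squnion> y i) \<sqinter> (x j \<squnion> y j) = x i \<sqinter> x j \<squnion> y i \<sqinter> y j"
      by (cases "i = j") auto
  qed
  then show "PP n x y" using g_PP by blast
qed

lemma P_iv: "PP n x y \<longleftrightarrow> (\<forall>I. I \<subseteq> {1..n} \<and> I \<noteq> {} \<longrightarrow>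
            Sup_fin ((\<lambda>i. inf (x i) (y i)) ` I) = inf (Sup_fin (x ` I)) (Sup_fin (y ` I)))"
proof
  assume P: "PP n x y"
  show "\<forall>I. I \<subseteq> {1..n} \<and> I \<noteq> {} \<longrightarrow>
            Sup_fin ((\<lambda>i. inf (x i) (y i)) ` I) = inf (Sup_fin (x ` I)) (Sup_fin (y ` I))"
  proof (intro allI impI)
    fix I assume I: "I \<subseteq> {1..n} \<and> I \<noteq> {}"
    then have f: "finite I" using finite_subset by blast
    have "\<forall>i\<in>I. \<forall>j\<in>I. x i \<sqinter> y j \<le> x j \<squnion> y i" using P I unfolding PP_def by blast
    then show "Sup_fin ((\<lambda>i. inf (x i) (y i)) ` I) = inf (Sup_fin (x ` I)) (Sup_fin (y ` I))"
      using ind_sup[OF f, of x y] triv_sup[OF f, of x y] I by (intro antisym) auto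
  qed
next
  assume H: "\<forall>I. I \<subseteq> {1..n} \<and> I \<noteq> {} \<longrightarrow>
            Sup_fin ((\<lambda>i. inf (x i) (y i)) ` I) = inf (Sup_fin (x ` I)) (Sup_fin (y ` I))"
  have "dually_g_comonotone n x y" unfolding dually_g_comonotone_def
  proof (intro ballI)
    fix i j assume ij: "i \<in> {1..n}" "j \<in> {1..n}"
    then have "{i,j} \<subseteq> {1..n} \<and> {i,j} \<noteq> {}" by auto
    then have "Sup_fin ((\<lambda>i. inf (x i) (y i)) ` {i,j}) = inf (Sup_fin (x ` {i,j})) (Sup_fin (y ` {i,j}))"
      using H by blast
    then show "x i \<sqinter> y i \<squnion> x j \<sqinter> y j = (x i \<squnion> x j) \<sqinter> (y i \<squnion> y j)"
      by (cases "i = j") auto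
  qed
  then show "PP n x y" using d_PP by blast
qed

theorem theorem2:
  fixes n :: nat and x y :: "nat \<Rightarrow> 'a::distrib_lattice"
  shows "(g_comonotone n x y \<longleftrightarrow> dually_g_comonotone n x y)
    \<and> (dually_g_comonotone n x y \<longleftrightarrow>
         (\<forall>I. I \<subseteq> {1..n} \<and> I \<noteq> {} \<longrightarrow>
            Inf_fin ((\<lambda>i. sup (x i) (y i)) ` I) = sup (Inf_fin (x ` I)) (Inf_fin (y ` I))))
    \<and> ((\<forall>I. I \<subseteq> {1..n} \<and> I \<noteq> {} \<longrightarrow>
            Inf_fin ((\<lambda>i. sup (x i) (y i)) ` I) = sup (Inf_fin (x ` I)) (Inf_fin (y ` I)))
       \<longleftrightarrow>
       (\<forall>I. I \<subseteq> {1..n} \<and> I \<noteq> {} \<longrightarrow>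
            Sup_fin ((\<lambda>i. inf (x i) (y i)) ` I) = inf (Sup_fin (x ` I)) (Sup_fin (y ` I))))"
  unfolding g_PP d_PP P_iii[symmetric] P_iv[symmetric] by simp

end
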